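(* Let $R$ be a reference string ending with the end-of-string character $\#$, and let ${\cal C}$ be the concatenation of a collection of strings $S_1,\dots,S_m$, each terminated by an end-of-string character, with total length $N$. Let $1\le i,j\le N$. If $\textit{ip}(i)=\textit{ip}(j)$ and neither $i$ nor $j$ is an insert-head, then $\textit{suf}_i$ and $\textit{suf}_j$ are preceded by the same character $c=R[\textit{SA}_R[\textit{ip}(i)]-1]$, i.e. ${\cal C}[i-1]={\cal C}[j-1]=c=R[\textit{SA}_R[\textit{ip}(i)]-1]$.
   Context: Strings are indexed from 1; $T[i..j]$ is a substring, $\textit{suf}_i=T[i..]$. The character $\#$ is smaller than every other character, and smaller than the end-of-string characters of ${\cal C}$ (which are smaller than all other characters of ${\cal C}$). It is assumed every character of ${\cal C}$ occurs in $R$. $\textit{SA}_R$ is the suffix array of $R$: $\textit{SA}_R[k]$ is the starting position of the $k$-th smallest suffix of $R$ in lexicographic order. For a position $i$ of ${\cal C}$, the matching factor $U_i$ is the longest prefix of $\textit{suf}_i({\cal C})$ occurring as a substring of $R$, $\ell_i=|U_i|$, and $c_i={\cal C}[i+\ell_i]$ is the mismatch character. The insert point of $i$ is $\textit{ip}(i)=1$ if $U_i$ is empty; otherwise $\textit{ip}(i)=\max\{k : U_i \text{ is a prefix of } R[\textit{SA}_R[k]..] \text{ and } R[\textit{SA}_R[k]..]<U_ic_i\}$ if this set is nonempty, and $\textit{ip}(i)=\min\{k: U_i\text{ is a prefix of } R[\textit{SA}_R[k]..]\}$ otherwise. A position $j$ of ${\cal C}$ is an insert-head if $\textit{SA}_R[\textit{ip}(j)]\neq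 \textit{SA}_R[\textit{ip}(j-1)]+1$. *)

theory Defs
  imports Main "HOL-Library.Sublist"
begin

text \<open>Strings are lists; positions are 1-based as in the paper.\<close>

definition chr :: "'a list \<Rightarrow> nat \<Rightarrow> 'a" where
  "chr T k = T ! (k - 1)"

definition suf :: "'a list \<Rightarrow> nat \<Rightarrow> 'a list" where
  "suf T k = drop (k - 1) T"

text \<open>Strict lexicographic order on strings (a proper prefix is smaller).\<close>
definition lex_less :: "'a::linorder list \<Rightarrow> 'a list \<Rightarrow> bool" where
  "lex_less xs ys \<longleftrightarrow> (xs, ys) \<in> lexord {(a, b). a < b}"

definition SA :: "'a::linorder list \<Rightarrow> nat \<Rightarrow> nat" where
  "SA R k = (THE p. p \<in> {1..length R} \<and>
       card {q \<in> {1..length R}. lex_less (suf R q) (suf R p)} = k - 1)"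

definition mlen :: "'a list \<Rightarrow> 'a list \<Rightarrow> nat \<Rightarrow> nat" where
  "mlen R C i = (GREATEST l. l \<le> length (suf C i) \<and> sublist (take l (suf C i)) R)"

definition mfactor :: "'a list \<Rightarrow> 'a list \<Rightarrow> nat \<Rightarrow> 'a list" where
  "mfactor R C i = take (mlen R C i) (suf C i)"

definition mischar :: "'a list \<Rightarrow> 'a list \<Rightarrow> nat \<Rightarrow> 'a" where
  "mischar R C i = chr C (i + mlen R C i)"

definition ip :: "'a::linorder list \<Rightarrow> 'a list \<Rightarrow> nat \<Rightarrow> nat" where
  "ip R C i =
    (let U = mfactor R C i; c = mischar R C i;
         A = {k \<in> {1..length R}. prefix U (suf R (SA R k)) \<and> lex_less (suf R (SA R k)) (U @ [c])};
         B = {k \<in> {1..length R}. prefix U (suf R (SA R k))}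
     in if U = [] then 1 else if A \<noteq> {} then Max A else Min B)"

text \<open>Insert-head. Position 1 has no predecessor position, so it is treated as an
  insert-head by convention.\<close>
definition insert_head :: "'a::linorder list \<Rightarrow> 'a list \<Rightarrow> nat \<Rightarrow> bool" where
  "insert_head R C j \<longleftrightarrow> j = 1 \<or> SA R (ip R C j) \<noteq> SA R (ip R C (j - 1)) + 1"

end

theory Submission
  imports Defs
begin


lemma lex_irrefl: "\<not> lex_less (xs::'a::linorder list) xs"
  unfolding lex_less_def by (rule lexord_irreflexive) auto

lemma lex_trans: "lex_less (xs::'a::linorder list) ys \<Longrightarrow> lex_less ys zs \<Longrightarrow> lex_less xs zs"
  unfolding lex_less_def by (erule lexord_trans) (auto simp: trans_def)

lemma lex_total: "(xs::'a::linorder list) \<noteq> ys \<Longrightarrow> lex_less xs ys \<or> lex_less ys xs"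
  unfolding lex_less_def using total_lexord[of "{(a, b). (a::'a) < b}"]
  by (metis (mono_tags, lifting) UNIV_I case_prodI mem_Collect_eq neq_iff total_on_def)

lemma SA_hit:
  fixes R :: "'a::linorder list"
  assumes p: "p \<in> {1..length R}"
  shows "\<exists>k\<in>{1..length R}. SA R k = p"
proof -
  define rk where "rk q = card {q' \<in> {1..length R}. lex_less (suf R q') (suf R q)}" for q
  have uniq: "q = p" if q: "q \<in> {1..length R}" and eq: "rk q = rk p" for q
  proof (rule ccontr)
    assume ne: "q \<noteq> p"
    have "suf R q \<noteq> suf R p" using ne p q by (auto simp: suf_def dest: arg_cong[where f=length])
    then have "lex_less (suf R q) (suf R p) \<or> lex_less (suf R p) (suf R q)" by (rule lex_total)
    then show False
    proof
      assume l: "lex_less (suf R q) (suf R p)"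
      have "insert q {q' \<in> {1..length R}. lex_less (suf R q') (suf R q)} \<subseteq> {q' \<in> {1..length R}. lex_less (suf R q') (suf R p)}"
        using l q lex_trans by blast
      then have "card (insert q {q' \<in> {1..length R}. lex_less (suf R q') (suf R q)}) \<le> rk p"
        unfolding rk_def by (intro card_mono) auto
      moreover have "q \<notin> {q' \<in> {1..length R}. lex_less (suf R q') (suf R q)}" using lex_irrefl by blast
      ultimately show False using eq unfolding rk_def by simp
    next
      assume l: "lex_less (suf R p) (suf R q)"
      have "insert p {q' \<in> {1..length R}. lex_less (suf R q') (suf R p)} \<subseteq> {q' \<in> {1..length R}. lex_less (suf R q') (suf R q)}"
        using l p lex_trans by blast
      then have "card (insert p {q' \<in> {1..length R}. lex_less (suf R q') (suf R p)}) \<le> rk q"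
        unfolding rk_def by (intro card_mono) auto
      moreover have "p \<notin> {q' \<in> {1..length R}. lex_less (suf R q') (suf R p)}" using lex_irrefl by blast
      ultimately show False using eq unfolding rk_def by simp
    qed
  qed
  have "rk p < length R"
  proof -
    have "{q' \<in> {1..length R}. lex_less (suf R q') (suf R p)} \<subset> {1..length R}"
      using p lex_irrefl by blast
    then show ?thesis unfolding rk_def by (metis card_atLeastAtMost diff_Suc_1 finite_atLeastAtMost psubset_card_mono)
  qed
  moreover have "SA R (rk p + 1) = p"
    unfolding SA_def
  proof (rule the_equality)
    show "p \<in> {1..length R} \<and> card {q \<in> {1..length R}. lex_less (suf R q) (suf R p)} = rk p + 1 - 1"
      using p by (simp add: rk_def)
  next
    fix q assume "q \<in> {1..length R} \<and> card {qa \<in> {1..length R}. lex_less (suf R qa) (suf R q)} = rk p + 1 - 1"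
    then show "q = p" using uniq unfolding rk_def by auto
  qed
  ultimately show ?thesis by (intro bexI[of _ "rk p + 1"]) auto
qed

lemma key:
  fixes R C :: "'a::linorder list"
  assumes n: "1 \<le> n" "n < length C" and CR: "set C \<subseteq> set R"
  shows "chr C n = chr R (SA R (ip R C n))"
proof -
  let ?P = "\<lambda>l. l \<le> length (suf C n) \<and> sublist (take l (suf C n)) R"
  have sl: "length (suf C n) = length C - (n - 1)" by (simp add: suf_def)
  have hd1: "take 1 (suf C n) = [chr C n]" using n
    by (simp add: suf_def chr_def take_Suc_conv_app_nth Cons_nth_drop_Suc[symmetric])
  have "C ! (n - 1) \<in> set R" using n CR by auto
  then have "sublist [C ! (n - 1)] R" unfolding sublist_def in_set_conv_decomp by fastforce
  then have P1: "?P 1" using n hd1 sl by (auto simp: chr_def)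
  have bnd: "\<forall>y. ?P y \<longrightarrow> y \<le> length (suf C n)" by blast
  have Pm: "?P (mlen R C n)" unfolding mlen_def by (rule GreatestI_nat[where P="?P", OF P1]) (use bnd in blast)
  have m1: "1 \<le> mlen R C n" unfolding mlen_def by (rule Greatest_le_nat[where P="?P", OF P1]) (use bnd in blast)
  define U where "U = mfactor R C n"
  have Une: "U \<noteq> []" using m1 n unfolding U_def mfactor_def suf_def by auto
  have hdU: "hd U = chr C n"
  proof -
    have "take 1 U = take 1 (suf C n)" using m1 unfolding U_def mfactor_def by (simp add: min_def)
    then show ?thesis using hd1 Une by (metis hd_take list.sel(1) zero_less_one)
  qed
  have subU: "sublist U R" using Pm unfolding U_def mfactor_def by blast
  then obtain ps ss where Rps: "R = ps @ U @ ss" by (auto simp: sublist_def)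
  define p where "p = length ps + 1"
  have p: "p \<in> {1..length R}" using Une Rps by (cases U) (auto simp: p_def)
  have "prefix U (suf R p)" using Rps by (simp add: p_def suf_def)
  then obtain k where k: "k \<in> {1..length R}" "prefix U (suf R (SA R k))" using SA_hit[OF p] by metis
  define A where "A = {k \<in> {1..length R}. prefix U (suf R (SA R k)) \<and> lex_less (suf R (SA R k)) (U @ [mischar R C n])}"
  define B where "B = {k \<in> {1..length R}. prefix U (suf R (SA R k))}"
  have ipd: "ip R C n = (if A \<noteq> {} then Max A else Min B)"
    using Une unfolding ip_def A_def B_def U_def Let_def by simp
  have AB: "A \<subseteq> B" "finite A" "finite B" unfolding A_def B_def by auto
  have "B \<noteq> {}" using k unfolding B_def by blast
  then have "ip R C n \<in> B" using ipd AB by (auto intro: Max_in Min_in)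
  then have pre: "prefix U (suf R (SA R (ip R C n)))" unfolding B_def by blast
  then obtain t where t: "suf R (SA R (ip R C n)) = U @ t" by (auto simp: prefix_def)
  have "drop (SA R (ip R C n) - 1) R \<noteq> []" using t Une by (simp add: suf_def)
  then have "hd (suf R (SA R (ip R C n))) = chr R (SA R (ip R C n))"
    by (simp add: suf_def chr_def hd_drop_conv_nth)
  then show ?thesis using t Une hdU by simp
qed


theorem lemma5:
  fixes R :: "'a::linorder list" and Ss :: "'a list list" and E :: "'a set"
    and hash :: 'a and i j :: nat
  assumes R_end: "R \<noteq> []" "last R = hash" "hash \<notin> set (butlast R)"
    and hash_min: "\<forall>x. x \<noteq> hash \<longrightarrow> hash < x"
    and E_gt_hash: "\<forall>e\<in>E. hash < e"
    and strings_term: "\<forall>S\<in>set Ss. S \<noteq> [] \<and> last S \<in> E \<and> set (butlast S) \<inter> E = {}"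
    and E_min: "\<forall>x\<in>set (concat Ss). x \<notin> E \<longrightarrow> (\<forall>e\<in>E. e < x)"
    and chars_in_R: "set (concat Ss) \<subseteq> set R"
    and i_range: "1 \<le> i" "i \<le> length (concat Ss)"
    and j_range: "1 \<le> j" "j \<le> length (concat Ss)"
    and same_ip: "ip R (concat Ss) i = ip R (concat Ss) j"
    and not_head_i: "\<not> insert_head R (concat Ss) i"
    and not_head_j: "\<not> insert_head R (concat Ss) j"
  shows "chr (concat Ss) (i - 1) = chr R (SA R (ip R (concat Ss) i) - 1)
       \<and> chr (concat Ss) (j - 1) = chr R (SA R (ip R (concat Ss) i) - 1)"
proof -
  have gen: "chr (concat Ss) (x - 1) = chr R (SA R (ip R (concat Ss) x) - 1)"
    if "1 \<le> x" "x \<le> length (concat Ss)" "\<not> insert_head R (concat Ss) x" for x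
  proof -
    have x1: "x \<noteq> 1" and eq: "SA R (ip R (concat Ss) x) = SA R (ip R (concat Ss) (x - 1)) + 1"
      using that(3) unfolding insert_head_def by auto
    have "chr (concat Ss) (x - 1) = chr R (SA R (ip R (concat Ss) (x - 1)))"
      using that x1 chars_in_R by (intro key) auto
    then show ?thesis using eq by simp
  qed
  show ?thesis using gen[OF i_range not_head_i] gen[OF j_range not_head_j] same_ip by simp
qed

end
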